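(* Let $\mathcal B^L_\Omega,\mathcal B^P_\Omega>0$ be constants such that $\|P_{L'}^*-P_L^*\|\le\mathcal B^P_\Omega\|L'-L\|$ whenever $L,L'\in\Omega$ and $\|L'-L\|\le\mathcal B^L_\Omega$ (such constants exist under the standing assumptions), and assume $B\ne0$, $C\ne0$. For any $L,L'\in\Omega$ with $$\|L'-L\|\le\min\Big\{\mathcal B^L_\Omega,\ \frac{\|B\|(\mathcal B^P_\Omega\|\tilde A_L-BK(L)\|+\|P_L^*\|\|C\|)}{\mathcal B^P_\Omega\|B\|\|C\|}\Big\},$$ it holds that $\|K(L')-K(L)\|\le\dfrac{2\|B\|(\mathcal B^P_\Omega\|\tilde A_L-BK(L)\|+\|P_L^*\|\|C\|)}{\sigma_{\min}(R^u)}\|L'-L\|$.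
   Context: Zero-sum LQ game: $A\in\mathbb R^{d\times d}$, $B\in\mathbb R^{d\times m_1}$, $C\in\mathbb R^{d\times m_2}$, symmetric positive definite $Q,R^u,R^v$. For $L$ with $Q-L^\top R^vL\succ0$: $\tilde A_L=A-CL$, $P_L^*\succ0$ is the stabilizing solution of $P=Q-L^\top R^vL+\tilde A_L^\top P\tilde A_L-\tilde A_L^\top PB(R^u+B^\top PB)^{-1}B^\top P\tilde A_L$, and $K(L)=(R^u+B^\top P_L^*B)^{-1}B^\top P_L^*\tilde A_L$. Standing assumptions: $\mathbb E[x_0x_0^\top]\succ0$; the GARE $P=A^\top PA+Q-[A^\top PB\ \ A^\top PC]\begin{bmatrix}R^u+B^\top PB & B^\top PC\\ C^\top PB & -R^v+C^\top PC\end{bmatrix}^{-1}\begin{bmatrix}B^\top PA\\ C^\top PA\end{bmatrix}$ has a minimal positive definite solution $P^*$ with $R^v-C^\top P^*C\succ0$, and $Q-(L^* )^\top R^vL^*\succ0$ for $L^*=[-R^v+C^\top P^*C-C^\top P^*B(R^u+B^\top P^*B)^{-1}B^\top P^*C]^{-1}[C^\top P^*A-C^\top P^*B(R^u+B^\top P^*B)^{-1}B^\top P^*A]$. $0<\zeta<\sigma_{\min}(Q-(L^* )^\top R^vL^* )$, $\Omega=\{L:Q-L^\top R^vL\succeq\zeta I\}$. $\|\cdot\|$ is the spectral norm. *)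

theory Defs
  imports "HOL-Analysis.Analysis"
begin

text \<open>Matrices are Cartesian-product matrices real^'c^'r (r rows, c columns).\<close>

definition mnorm :: "real^'c^'r \<Rightarrow> real" where
  "mnorm M = onorm (\<lambda>x. M *v x)"

definition sigma_min :: "real^'n^'n \<Rightarrow> real" where
  "sigma_min M = Inf {norm (M *v x) | x. norm x = 1}"

definition symm :: "real^'n^'n \<Rightarrow> bool" where
  "symm M \<longleftrightarrow> transpose M = M"

definition posdef :: "real^'n^'n \<Rightarrow> bool" where
  "posdef M \<longleftrightarrow> symm M \<and> (\<forall>x. x \<noteq> 0 \<longrightarrow> x \<bullet> (M *v x) > 0)"

definition psd :: "real^'n^'n \<Rightarrow> bool" where
  "psd M \<longleftrightarrow> symm M \<and> (\<forall>x. x \<bullet> (M *v x) \<ge> 0)"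

definition cmat :: "real^'n^'n \<Rightarrow> complex^'n^'n" where
  "cmat M = (\<chi> i j. complex_of_real (M $ i $ j))"

definition schur_stable :: "real^'n^'n \<Rightarrow> bool" where
  "schur_stable M \<longleftrightarrow>
     (\<forall>(c::complex) (v::complex^'n). v \<noteq> 0 \<and> cmat M *v v = c *s v \<longrightarrow> cmod c < 1)"

definition hcat :: "real^'a^'d \<Rightarrow> real^'b^'d \<Rightarrow> real^('a + 'b)^'d" where
  "hcat X Y = (\<chi> i j. case j of Inl b \<Rightarrow> X $ i $ b | Inr b \<Rightarrow> Y $ i $ b)"

definition vcat :: "real^'d^'a \<Rightarrow> real^'d^'b \<Rightarrow> real^'d^('a + 'b)" where
  "vcat X Y = (\<chi> i j. case i of Inl a \<Rightarrow> X $ a $ j | Inr a \<Rightarrow> Y $ a $ j)"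

definition blk :: "real^'a^'a \<Rightarrow> real^'b^'a \<Rightarrow> real^'a^'b \<Rightarrow> real^'b^'b \<Rightarrow> real^('a + 'b)^('a + 'b)" where
  "blk M11 M12 M21 M22 = (\<chi> i j. case i of
      Inl a \<Rightarrow> (case j of Inl b \<Rightarrow> M11 $ a $ b | Inr b \<Rightarrow> M12 $ a $ b)
    | Inr a \<Rightarrow> (case j of Inl b \<Rightarrow> M21 $ a $ b | Inr b \<Rightarrow> M22 $ a $ b))"

definition gare ::
  "real^'d^'d \<Rightarrow> real^'m1^'d \<Rightarrow> real^'m2^'d \<Rightarrow> real^'d^'d \<Rightarrow> real^'m1^'m1 \<Rightarrow> real^'m2^'m2 \<Rightarrow> real^'d^'d \<Rightarrow> bool" where
  "gare A B C Q Ru Rv P \<longleftrightarrow>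
     P = transpose A ** P ** A + Q
         - hcat (transpose A ** P ** B) (transpose A ** P ** C)
           ** matrix_inv (blk (Ru + transpose B ** P ** B) (transpose B ** P ** C)
                              (transpose C ** P ** B) (- Rv + transpose C ** P ** C))
           ** vcat (transpose B ** P ** A) (transpose C ** P ** A)"

definition gare_min_pd_sol where
  "gare_min_pd_sol A B C Q Ru Rv P \<longleftrightarrow>
     posdef P \<and> gare A B C Q Ru Rv P \<and>
     (\<forall>P'. posdef P' \<and> gare A B C Q Ru Rv P' \<longrightarrow> psd (P' - P))"

definition Lstar ::
  "real^'d^'d \<Rightarrow> real^'m1^'d \<Rightarrow> real^'m2^'d \<Rightarrow> real^'m1^'m1 \<Rightarrow> real^'m2^'m2 \<Rightarrow> real^'d^'d \<Rightarrow> real^'d^'m2" where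
  "Lstar A B C Ru Rv P =
     matrix_inv (- Rv + transpose C ** P ** C
                 - transpose C ** P ** B ** matrix_inv (Ru + transpose B ** P ** B) ** transpose B ** P ** C)
     ** (transpose C ** P ** A
         - transpose C ** P ** B ** matrix_inv (Ru + transpose B ** P ** B) ** transpose B ** P ** A)"

definition Atil :: "real^'d^'d \<Rightarrow> real^'m2^'d \<Rightarrow> real^'d^'m2 \<Rightarrow> real^'d^'d" where
  "Atil A C L = A - C ** L"

text \<open>K(L) computed from a given P (to be applied with P = P_L^*).\<close>
definition Kgain ::
  "real^'d^'d \<Rightarrow> real^'m1^'d \<Rightarrow> real^'m2^'d \<Rightarrow> real^'m1^'m1 \<Rightarrow> real^'d^'d \<Rightarrow> real^'d^'m2 \<Rightarrow> real^'d^'m1" where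
  "Kgain A B C Ru P L = matrix_inv (Ru + transpose B ** P ** B) ** transpose B ** P ** Atil A C L"

definition riccati_L where
  "riccati_L A B C Q Ru Rv L P \<longleftrightarrow>
     P = Q - transpose L ** Rv ** L + transpose (Atil A C L) ** P ** Atil A C L
         - transpose (Atil A C L) ** P ** B ** matrix_inv (Ru + transpose B ** P ** B)
           ** transpose B ** P ** Atil A C L"

definition stab_sol_L where
  "stab_sol_L A B C Q Ru Rv L P \<longleftrightarrow>
     posdef P \<and> riccati_L A B C Q Ru Rv L P \<and>
     schur_stable (Atil A C L - B ** Kgain A B C Ru P L)"

definition Omega where
  "Omega Q Rv \<zeta> = {L. psd (Q - transpose L ** Rv ** L - \<zeta> *\<^sub>R mat 1)}"

end

theory Submission
  imports Defs
begin


lemma mnorm_bl: "bounded_linear (\<lambda>x. (M::real^'c^'r) *v x)"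
  by simp

lemma mnorm_ge0: "0 \<le> mnorm M"
  unfolding mnorm_def by (rule onorm_pos_le[OF mnorm_bl])

lemma mnorm_app: "norm (M *v x) \<le> mnorm M * norm x"
  unfolding mnorm_def by (rule onorm[OF mnorm_bl])

lemma mnorm_leI: "(\<And>x. norm ((M::real^'c^'r) *v x) \<le> b * norm x) \<Longrightarrow> mnorm M \<le> b"
  unfolding mnorm_def by (rule onorm_le)

lemma mnorm_mult: "mnorm ((M::real^'b^'a) ** (N::real^'c^'b)) \<le> mnorm M * mnorm N"
proof (rule mnorm_leI)
  fix x
  have "norm ((M ** N) *v x) = norm (M *v (N *v x))" by (simp add: matrix_vector_mul_assoc)
  also have "\<dots> \<le> mnorm M * norm (N *v x)" by (rule mnorm_app)
  also have "\<dots> \<le> mnorm M * (mnorm N * norm x)" by (rule mult_left_mono[OF mnorm_app mnorm_ge0])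
  finally show "norm ((M ** N) *v x) \<le> mnorm M * mnorm N * norm x" by simp
qed

lemma mnorm_add: "mnorm ((M::real^'c^'r) + N) \<le> mnorm M + mnorm N"
proof (rule mnorm_leI)
  fix x
  have "norm ((M + N) *v x) \<le> norm (M *v x) + norm (N *v x)"
    by (simp add: matrix_vector_mult_add_rdistrib norm_triangle_ineq)
  also have "\<dots> \<le> mnorm M * norm x + mnorm N * norm x" by (intro add_mono mnorm_app)
  finally show "norm ((M + N) *v x) \<le> (mnorm M + mnorm N) * norm x" by (simp add: algebra_simps)
qed

lemma mnorm_eq0: "mnorm (M::real^'c^'r) = 0 \<Longrightarrow> M = 0"
proof -
  assume "mnorm M = 0"
  hence "\<forall>x. M *v x = 0" unfolding mnorm_def using onorm_eq_0[OF mnorm_bl] by blast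
  thus "M = 0" by (simp add: matrix_eq)
qed

lemma inner_transpose: "inner (x::real^'r) ((M::real^'c^'r) *v y) = inner (transpose M *v x) y"
  by (simp add: dot_lmul_matrix)

lemma mnorm_transpose_le: "mnorm (transpose (M::real^'c^'r)) \<le> mnorm M"
proof (rule mnorm_leI)
  fix x :: "real^'r"
  let ?y = "transpose M *v x"
  have "norm ?y ^ 2 = inner x (M *v ?y)" by (simp add: inner_transpose power2_norm_eq_inner)
  also have "\<dots> \<le> norm x * norm (M *v ?y)" by (rule Cauchy_Schwarz_ineq2[THEN order_trans[OF abs_ge_self]])
  also have "\<dots> \<le> norm x * (mnorm M * norm ?y)" by (rule mult_left_mono[OF mnorm_app norm_ge_zero])
  finally have h: "norm ?y * norm ?y \<le> (mnorm M * norm x) * norm ?y" by (simp add: power2_eq_square algebra_simps)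
  show "norm ?y \<le> mnorm M * norm x"
  proof (cases "norm ?y = 0")
    case True then show ?thesis using mnorm_ge0[of M] by simp
  next
    case False
    hence "norm ?y > 0" by simp
    then show ?thesis using h by (simp add: mult_le_cancel_right)
  qed
qed

lemma mnorm_transpose: "mnorm (transpose (M::real^'c^'r)) = mnorm M"
  using mnorm_transpose_le[of M] mnorm_transpose_le[of "transpose M"] by simp




lemma quad_zero: "(\<And>e::real. 0 \<le> 2*e*a + e*e*b) \<Longrightarrow> a = 0"
proof -
  assume h: "\<And>e::real. 0 \<le> 2*e*a + e*e*b"
  define c where "c = \<bar>b\<bar> + 1"
  have c: "c > 0" "b \<le> c" unfolding c_def by auto
  have "0 \<le> 2*(-a/c)*a + (-a/c)*(-a/c)*b" by (rule h)
  hence "0 \<le> c * (2*(-a/c)*a + (-a/c)*(-a/c)*b)" using c by simp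
  moreover have "c * (2*(-a/c)*a + (-a/c)*(-a/c)*b) = -2*a*a + a*a*b/c" using c by (simp add: field_simps)
  ultimately have "0 \<le> -2*a*a + a*a*b/c" by simp
  moreover have "a*a*b/c \<le> a*a" using c by (simp add: divide_le_eq mult_left_mono)
  ultimately have "a*a \<le> 0" by linarith
  thus "a = 0" by (metis mult_le_0_iff order_antisym_conv)
qed

lemma rayleigh:
  fixes S :: "real^'n^'n"
  assumes S: "posdef S"
  shows "sigma_min S > 0 \<and> (\<forall>x. inner x (S *v x) \<ge> sigma_min S * norm x ^ 2)"
proof -
  have sym: "transpose S = S" using S by (simp add: posdef_def symm_def)
  have symi: "inner x (S *v y) = inner y (S *v x)" for x y
    by (metis inner_commute inner_transpose sym)
  define f where "f x = inner x (S *v x)" for x :: "real^'n"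
  have cf: "continuous_on (sphere 0 1) f" unfolding f_def
    by (intro continuous_intros linear_continuous_on) simp
  have ne: "sphere (0::real^'n) 1 \<noteq> {}" by simp
  obtain x0 where x0: "x0 \<in> sphere 0 1" and min: "\<And>y. y \<in> sphere 0 1 \<Longrightarrow> f x0 \<le> f y"
    using continuous_attains_inf[OF compact_sphere ne cf] by blast
  have nx0: "norm x0 = 1" using x0 by simp
  define l where "l = f x0"
  have "x0 \<noteq> 0" using nx0 by auto
  hence lpos: "l > 0" unfolding l_def f_def using S by (auto simp: posdef_def)
  have quad: "f x \<ge> l * norm x ^ 2" for x
  proof (cases "x = 0")
    case True then show ?thesis by (simp add: f_def)
  next
    case False
    let ?u = "(1 / norm x) *\<^sub>R x"
    have "?u \<in> sphere 0 1" using False by simp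
    hence "l \<le> f ?u" unfolding l_def by (rule min)
    also have "f ?u = f x / norm x ^ 2" unfolding f_def
      by (simp add: matrix_vector_mult_scaleR power2_eq_square)
    finally show ?thesis using False by (simp add: field_simps)
  qed
  have eig: "S *v x0 = l *\<^sub>R x0"
  proof -
    have "inner y (S *v x0 - l *\<^sub>R x0) = 0" for y
    proof (rule quad_zero)
      fix e :: real
      have "0 \<le> f (x0 + e *\<^sub>R y) - l * norm (x0 + e *\<^sub>R y) ^ 2" using quad[of "x0 + e *\<^sub>R y"] by simp
      also have "f (x0 + e *\<^sub>R y) = f x0 + 2*e*inner y (S *v x0) + e*e* f y"
        unfolding f_def using symi[of x0 y]
        by (simp add: matrix_vector_right_distrib matrix_vector_mult_scaleR inner_add_left inner_add_right algebra_simps)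
      also have "norm (x0 + e *\<^sub>R y) ^ 2 = 1 + 2*e*inner y x0 + e*e*norm y ^ 2"
        using nx0 dot_square_norm[of x0] by (simp add: power2_norm_eq_inner inner_add_left inner_add_right inner_commute algebra_simps)
      finally show "0 \<le> 2*e*inner y (S *v x0 - l *\<^sub>R x0) + e*e*(f y - l * norm y ^ 2)"
        unfolding l_def by (simp add: inner_diff_right algebra_simps)
    qed
    from this[of "S *v x0 - l *\<^sub>R x0"] show ?thesis by simp
  qed
  let ?A = "{norm (S *v x) | x. norm x = 1}"
  have "sigma_min S \<le> l"
  proof -
    have "norm (S *v x0) \<in> ?A" using nx0 by blast
    moreover have "bdd_below ?A" by (rule bdd_belowI[of _ 0]) auto
    ultimately have "sigma_min S \<le> norm (S *v x0)" unfolding sigma_min_def by (rule cInf_lower)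
    also have "\<dots> = l" using eig nx0 lpos by simp
    finally show ?thesis .
  qed
  moreover have "l \<le> sigma_min S"
    unfolding sigma_min_def
  proof (rule cInf_greatest)
    show "?A \<noteq> {}" using nx0 by blast
    fix a assume "a \<in> ?A"
    then obtain x where x: "norm x = 1" "a = norm (S *v x)" by blast
    have "l \<le> f x" using quad[of x] x by simp
    also have "\<dots> \<le> norm x * norm (S *v x)" unfolding f_def by (rule Cauchy_Schwarz_ineq2[THEN order_trans[OF abs_ge_self]])
    finally show "l \<le> a" using x by simp
  qed
  ultimately have "sigma_min S = l" by simp
  thus ?thesis using lpos quad unfolding f_def by simp
qed



lemma Mbound:
  fixes Ru :: "real^'m^'m" and P :: "real^'d^'d" and B :: "real^'m^'d"
  assumes Ru: "posdef Ru" and P: "posdef P"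
  shows "invertible (Ru + transpose B ** P ** B) \<and>
         (\<forall>x. sigma_min Ru * norm x \<le> norm ((Ru + transpose B ** P ** B) *v x))"
proof -
  let ?M = "Ru + transpose B ** P ** B"
  obtain s where s: "s = sigma_min Ru" "s > 0" "\<And>x. inner x (Ru *v x) \<ge> s * norm x ^ 2"
    using rayleigh[OF Ru] by auto
  have nn: "inner x ((transpose B ** P ** B) *v x) \<ge> 0" for x
  proof -
    have "inner x ((transpose B ** P ** B) *v x) = inner (B *v x) (P *v (B *v x))"
      by (metis matrix_vector_mul_assoc inner_transpose transpose_transpose)
    also have "\<dots> \<ge> 0" using P by (cases "B *v x = 0") (auto simp: posdef_def intro: less_imp_le)
    finally show ?thesis .
  qed
  have low: "s * norm x \<le> norm (?M *v x)" for x
  proof -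
    have "s * norm x ^ 2 \<le> inner x (?M *v x)"
      using s(3)[of x] nn[of x] by (simp add: matrix_vector_mult_add_rdistrib inner_add_right)
    also have "\<dots> \<le> norm x * norm (?M *v x)" by (rule Cauchy_Schwarz_ineq2[THEN order_trans[OF abs_ge_self]])
    finally have h: "(s * norm x) * norm x \<le> norm (?M *v x) * norm x" by (simp add: power2_eq_square algebra_simps)
    show ?thesis
    proof (cases "x = 0")
      case True then show ?thesis by simp
    next
      case False then show ?thesis using h by simp
    qed
  qed
  have "\<forall>x. ?M *v x = 0 \<longrightarrow> x = 0"
  proof (intro allI impI)
    fix x assume "?M *v x = 0"
    hence "s * norm x \<le> 0" using low[of x] by simp
    thus "x = 0" using s(2) by (simp add: mult_le_0_iff)
  qed
  hence "invertible ?M" using matrix_left_invertible_ker invertible_left_inverse by blast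
  thus ?thesis using low s(1) by blast
qed

lemma inv_right: "invertible (M::real^'n^'n) \<Longrightarrow> M ** matrix_inv M = mat 1"
  unfolding invertible_def matrix_inv_def by (rule someI_ex[THEN conjunct1])



lemma key:
  fixes M' M Ru :: "real^'m^'m" and Bt :: "real^'d^'m" and B :: "real^'m^'d"
    and P P' :: "real^'d^'d" and C :: "real^'c^'d"
  assumes "M' = Ru + Bt ** P' ** B" "M = Ru + Bt ** P ** B"
    "M' *v k' = Bt *v (P' *v a')" "M *v k = Bt *v (P *v a)" "a' = a - C *v d"
  shows "M' *v (k' - k) = Bt *v ((P' - P) *v (a - B *v k)) - Bt *v (P' *v (C *v d))"
proof -
  have h: "Ru *v k + Bt *v (P *v (B *v k)) = Bt *v (P *v a)"
    using assms(2,4) by (simp only: matrix_vector_mult_add_rdistrib matrix_vector_mul_assoc[symmetric])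
  have e1: "Ru *v k = Bt *v (P *v a) - Bt *v (P *v (B *v k))"
    using h by (simp only: eq_diff_eq)
  have "M' *v (k' - k) = M' *v k' - (Ru *v k + Bt *v (P' *v (B *v k)))"
    using assms(1) by (simp only: matrix_vector_mult_diff_distrib matrix_vector_mult_add_rdistrib matrix_vector_mul_assoc[symmetric])
  also have "\<dots> = Bt *v (P' *v (a - C *v d)) - (Bt *v (P *v a) - Bt *v (P *v (B *v k)) + Bt *v (P' *v (B *v k)))"
    by (simp only: assms(3,5) e1)
  also have "\<dots> = Bt *v ((P' - P) *v (a - B *v k)) - Bt *v (P' *v (C *v d))"
    by (simp only: matrix_vector_mult_diff_distrib matrix_vector_mult_diff_rdistrib) (simp add: algebra_simps)
  finally show ?thesis .
qed

lemma inv_apply: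
  fixes M :: "real^'n^'n"
  assumes "invertible M"
  shows "M *v ((matrix_inv M ** X ** Y ** Z) *v w) = X *v (Y *v (Z *v w))"
proof -
  have "M *v ((matrix_inv M ** X ** Y ** Z) *v w) = (M ** matrix_inv M) *v (X *v (Y *v (Z *v w)))"
    by (metis matrix_vector_mul_assoc)
  also have "\<dots> = X *v (Y *v (Z *v w))" using inv_right[OF assms] by simp
  finally show ?thesis .
qed

lemma norm3: "norm (M1 *v (M2 *v (M3 *v w))) \<le> mnorm M1 * mnorm M2 * mnorm M3 * norm w"
proof -
  have "norm (M1 *v (M2 *v (M3 *v w))) \<le> mnorm M1 * norm (M2 *v (M3 *v w))" by (rule mnorm_app)
  also have "\<dots> \<le> mnorm M1 * (mnorm M2 * norm (M3 *v w))" by (rule mult_left_mono[OF mnorm_app mnorm_ge0])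
  also have "\<dots> \<le> mnorm M1 * (mnorm M2 * (mnorm M3 * norm w))"
    by (intro mult_left_mono[OF _ mnorm_ge0] mnorm_app)
  finally show ?thesis by (simp add: mult.assoc)
qed

lemma norm4: "norm (M1 *v (M2 *v (M3 *v (M4 *v w)))) \<le> mnorm M1 * mnorm M2 * mnorm M3 * mnorm M4 * norm w"
proof -
  have "norm (M1 *v (M2 *v (M3 *v (M4 *v w)))) \<le> mnorm M1 * mnorm M2 * mnorm M3 * norm (M4 *v w)" by (rule norm3)
  also have "\<dots> \<le> mnorm M1 * mnorm M2 * mnorm M3 * (mnorm M4 * norm w)"
    by (intro mult_left_mono[OF mnorm_app] mult_nonneg_nonneg mnorm_ge0)
  finally show ?thesis by (simp add: mult.assoc)
qed



theorem mainTheorem17: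
  fixes A Q :: "real^'d^'d" and B :: "real^'m1^'d" and C :: "real^'m2^'d"
    and Ru :: "real^'m1^'m1" and Rv :: "real^'m2^'m2"
    and Ps :: "real^'d^'d" and \<zeta> BL BP :: real
    and Pstar :: "real^'d^'m2 \<Rightarrow> real^'d^'d"
    and L L' :: "real^'d^'m2"
  assumes Q: "posdef Q" and Ru: "posdef Ru" and Rv: "posdef Rv"
    and Ps: "gare_min_pd_sol A B C Q Ru Rv Ps"
    and RvC: "posdef (Rv - transpose C ** Ps ** C)"
    and Lst: "posdef (Q - transpose (Lstar A B C Ru Rv Ps) ** Rv ** Lstar A B C Ru Rv Ps)"
    and zeta: "0 < \<zeta>" "\<zeta> < sigma_min (Q - transpose (Lstar A B C Ru Rv Ps) ** Rv ** Lstar A B C Ru Rv Ps)"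
    and Pstar: "\<forall>M \<in> Omega Q Rv \<zeta>. stab_sol_L A B C Q Ru Rv M (Pstar M)"
    and BLpos: "BL > 0" and BPpos: "BP > 0"
    and lip: "\<forall>M \<in> Omega Q Rv \<zeta>. \<forall>M' \<in> Omega Q Rv \<zeta>. mnorm (M' - M) \<le> BL \<longrightarrow>
                 mnorm (Pstar M' - Pstar M) \<le> BP * mnorm (M' - M)"
    and B0: "B \<noteq> 0" and C0: "C \<noteq> 0"
    and L: "L \<in> Omega Q Rv \<zeta>" and L': "L' \<in> Omega Q Rv \<zeta>"
    and close: "mnorm (L' - L) \<le> min BL
       (mnorm B * (BP * mnorm (Atil A C L - B ** Kgain A B C Ru (Pstar L) L) + mnorm (Pstar L) * mnorm C)
        / (BP * mnorm B * mnorm C))"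
  shows "mnorm (Kgain A B C Ru (Pstar L') L' - Kgain A B C Ru (Pstar L) L)
     \<le> 2 * mnorm B * (BP * mnorm (Atil A C L - B ** Kgain A B C Ru (Pstar L) L) + mnorm (Pstar L) * mnorm C)
        / sigma_min Ru * mnorm (L' - L)"
proof -
  define P where "P = Pstar L"
  define P' where "P' = Pstar L'"
  define K where "K = Kgain A B C Ru P L"
  define K' where "K' = Kgain A B C Ru P' L'"
  define E where "E = Atil A C L - B ** K"
  define X where "X = BP * mnorm E + mnorm P * mnorm C"
  define dL where "dL = mnorm (L' - L)"
  define s where "s = sigma_min Ru"
  define M where "M = Ru + transpose B ** P ** B"
  define M' where "M' = Ru + transpose B ** P' ** B"
  have Pd: "posdef P" using Pstar L unfolding P_def stab_sol_L_def by blast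
  have P'd: "posdef P'" using Pstar L' unfolding P'_def stab_sol_L_def by blast
  have s: "s > 0" using rayleigh[OF Ru] unfolding s_def by blast
  have Mi: "invertible M" using Mbound[OF Ru Pd] unfolding M_def by blast
  have M'i: "invertible M'" and M'low: "\<And>x. s * norm x \<le> norm (M' *v x)"
    using Mbound[OF Ru P'd] unfolding M'_def s_def by blast+
  have "mnorm B \<noteq> 0" using B0 mnorm_eq0 by blast
  with mnorm_ge0[of B] have mB: "mnorm B > 0" by linarith
  have "mnorm C \<noteq> 0" using C0 mnorm_eq0 by blast
  with mnorm_ge0[of C] have mC: "mnorm C > 0" by linarith
  have dL0: "0 \<le> dL" unfolding dL_def by (rule mnorm_ge0)
  have dLBL: "dL \<le> BL" using close unfolding dL_def by (rule order_trans[OF _ min.cobounded1])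
  have dP: "mnorm (P' - P) \<le> BP * dL"
    using lip[rule_format, OF L L' dLBL[unfolded dL_def]] unfolding P_def P'_def dL_def .
  have mP': "mnorm P' \<le> mnorm P + BP * dL"
  proof -
    have "mnorm P' = mnorm (P + (P' - P))" by simp
    also have "\<dots> \<le> mnorm P + mnorm (P' - P)" by (rule mnorm_add)
    finally show ?thesis using dP by simp
  qed
  have dLX: "BP * dL * mnorm C \<le> X"
  proof -
    have "dL \<le> min BL (mnorm B * X / (BP * mnorm B * mnorm C))"
      using close unfolding dL_def X_def E_def K_def P_def .
    hence "dL \<le> mnorm B * X / (BP * mnorm B * mnorm C)" by (rule order_trans[OF _ min.cobounded2])
    also have "\<dots> = X / (BP * mnorm C)" using mB by simp
    finally have "dL \<le> X / (BP * mnorm C)" .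
    hence "dL * (BP * mnorm C) \<le> X" using BPpos mC by (simp add: pos_le_divide_eq)
    thus ?thesis by (simp add: ac_simps)
  qed
  have bound: "norm (M' *v ((K' - K) *v w)) \<le> 2 * mnorm B * X * dL * norm w" for w
  proof -
    have "M' *v ((K' - K) *v w) = M' *v (K' *v w - K *v w)"
      by (simp add: matrix_vector_mult_diff_rdistrib)
    also have "\<dots> = transpose B *v ((P' - P) *v (Atil A C L *v w - B *v (K *v w)))
          - transpose B *v (P' *v (C *v ((L' - L) *v w)))"
    proof (rule key[OF M'_def M_def])
      show "M' *v (K' *v w) = transpose B *v (P' *v (Atil A C L' *v w))"
        unfolding K'_def Kgain_def M'_def[symmetric] by (rule inv_apply[OF M'i])
      show "M *v (K *v w) = transpose B *v (P *v (Atil A C L *v w))"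
        unfolding K_def Kgain_def M_def[symmetric] by (rule inv_apply[OF Mi])
      show "Atil A C L' *v w = Atil A C L *v w - C *v ((L' - L) *v w)"
        unfolding Atil_def
        by (simp only: matrix_vector_mult_diff_rdistrib matrix_vector_mult_diff_distrib matrix_vector_mul_assoc[symmetric]) (simp add: algebra_simps)
    qed
    also have "Atil A C L *v w - B *v (K *v w) = E *v w"
      unfolding E_def by (simp add: matrix_vector_mult_diff_rdistrib matrix_vector_mul_assoc)
    finally have eq: "M' *v ((K' - K) *v w) = transpose B *v ((P' - P) *v (E *v w))
          - transpose B *v (P' *v (C *v ((L' - L) *v w)))" .
    have "norm (M' *v ((K' - K) *v w)) \<le> norm (transpose B *v ((P' - P) *v (E *v w)))
          + norm (transpose B *v (P' *v (C *v ((L' - L) *v w))))"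
      unfolding eq by (rule norm_triangle_ineq4)
    also have "\<dots> \<le> mnorm B * mnorm (P' - P) * mnorm E * norm w + mnorm B * mnorm P' * mnorm C * dL * norm w"
      using norm3[of "transpose B" "P' - P" E w] norm4[of "transpose B" P' C "L' - L" w]
      unfolding mnorm_transpose dL_def by linarith
    also have "\<dots> \<le> mnorm B * (BP * dL) * mnorm E * norm w + mnorm B * (mnorm P + BP * dL) * mnorm C * dL * norm w"
    proof (rule add_mono)
      show "mnorm B * mnorm (P' - P) * mnorm E * norm w \<le> mnorm B * (BP * dL) * mnorm E * norm w"
        by (intro mult_right_mono mult_left_mono dP) (simp_all add: mnorm_ge0)
      show "mnorm B * mnorm P' * mnorm C * dL * norm w \<le> mnorm B * (mnorm P + BP * dL) * mnorm C * dL * norm w"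
        using dL0 by (intro mult_right_mono mult_left_mono mP') (simp_all add: mnorm_ge0)
    qed
    also have "\<dots> = mnorm B * dL * norm w * (BP * mnorm E + mnorm P * mnorm C + BP * dL * mnorm C)"
      by (simp add: algebra_simps)
    also have "\<dots> \<le> mnorm B * dL * norm w * (2 * X)"
      using dLX mB dL0 unfolding X_def by (intro mult_left_mono) auto
    finally show ?thesis by (simp add: algebra_simps)
  qed
  have "mnorm (K' - K) \<le> 2 * mnorm B * X / s * dL"
  proof (rule mnorm_leI)
    fix w
    have "s * norm ((K' - K) *v w) \<le> 2 * mnorm B * X * dL * norm w"
      using M'low[of "(K' - K) *v w"] bound[of w] by linarith
    hence "norm ((K' - K) *v w) \<le> (2 * mnorm B * X * dL * norm w) / s"
      using s by (simp add: pos_le_divide_eq mult.commute)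
    also have "(2 * mnorm B * X * dL * norm w) / s = 2 * mnorm B * X / s * dL * norm w" by simp
    finally show "norm ((K' - K) *v w) \<le> 2 * mnorm B * X / s * dL * norm w" .
  qed
  thus ?thesis unfolding K'_def K_def P'_def P_def X_def dL_def s_def E_def K_def P_def .
qed

end
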